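(* For $\tau$ in the upper half plane, with $\eta=\eta(\tau)$: $$\theta_2(0|\tfrac{2\tau}{3})\theta_3(0|6\tau)-\theta_3(0|\tfrac{2\tau}{3})\theta_2(0|6\tau)=2\eta^2,$$ $$\theta_4(0|\tfrac{3\tau}{2})\theta_3(0|\tfrac{\tau}{6})-\theta_3(0|\tfrac{3\tau}{2})\theta_4(0|\tfrac{\tau}{6})=4\eta^2.$$
   Context: With $q^s=e^{2\pi i s\tau}$: $\theta_2(0|\tau)=\sum_{n\in\mathbb{Z}} q^{(n+1/2)^2/2}$, $\theta_3(0|\tau)=\sum_{n} q^{n^2/2}$, $\theta_4(0|\tau)=\sum_{n}(-1)^n q^{n^2/2}$; $\eta(\tau)=q^{1/24}\prod_{n\ge1}(1-q^n)$. *)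

theory Defs
  imports "HOL-Analysis.Analysis"
begin

definition qpow :: "complex \<Rightarrow> real \<Rightarrow> complex" where
  "qpow \<tau> s = exp (2 * pi * \<i> * of_real s * \<tau>)"

definition theta2 :: "complex \<Rightarrow> complex" where
  "theta2 \<tau> = (\<Sum>\<^sub>\<infinity>n::int. qpow \<tau> ((of_int n + 1/2)^2 / 2))"

definition theta3 :: "complex \<Rightarrow> complex" where
  "theta3 \<tau> = (\<Sum>\<^sub>\<infinity>n::int. qpow \<tau> ((of_int n)^2 / 2))"

definition theta4 :: "complex \<Rightarrow> complex" where
  "theta4 \<tau> = (\<Sum>\<^sub>\<infinity>n::int. (-1) ^ nat \<bar>n\<bar> * qpow \<tau> ((of_int n)^2 / 2))"

definition dedekind_eta :: "complex \<Rightarrow> complex" where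
  "dedekind_eta \<tau> = qpow \<tau> (1/24) * (\<Prod>n. (1 - qpow \<tau> (real (Suc n))))"

end

theory Submission
  imports Defs
begin


lemma qpow_add: "qpow t (a + b) = qpow t a * qpow t b"
  unfolding qpow_def by (simp add: exp_add[symmetric] algebra_simps)

lemma norm_qpow: "norm (qpow t s) = exp (-2 * pi * s * Im t)"
  unfolding qpow_def by simp

lemma qpow_scale: "qpow (of_real c * t) s = qpow t (c * s)"
  unfolding qpow_def by (simp add: algebra_simps)

lemma qpow_nat: "qpow t (real n) = (qpow t 1)^n"
  unfolding qpow_def by (simp add: exp_of_nat_mult[symmetric] algebra_simps)

lemma geo_int_summable:
  fixes r :: real
  assumes "0 \<le> r" "r < 1"
  shows "(\<lambda>n::int. r ^ nat \<bar>n\<bar>) summable_on UNIV"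
proof -
  have U: "(UNIV::int set) = range int \<union> range (\<lambda>n. - int (Suc n))"
  proof -
    have "x \<in> range int \<union> range (\<lambda>n. - int (Suc n))" for x :: int
    proof (cases "x \<ge> 0")
      case True
      then have "x = int (nat x)" by simp
      then show ?thesis by blast
    next
      case False
      then have "x = - int (Suc (nat (-x - 1)))" by simp
      then show ?thesis by blast
    qed
    then show ?thesis by blast
  qed
  have s1: "summable (\<lambda>n. norm (r ^ n))" using assms by (simp add: summable_geometric)
  have s2: "summable (\<lambda>n. norm (r ^ Suc n))" using assms by (simp add: summable_geometric)
  have a: "(\<lambda>n::int. r ^ nat \<bar>n\<bar>) summable_on range int"
    by (subst summable_on_reindex) (auto simp: o_def intro: norm_summable_imp_summable_on[OF s1])
  have b: "(\<lambda>n::int. r ^ nat \<bar>n\<bar>) summable_on range (\<lambda>n. - int (Suc n))"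
  proof -
    have s2': "(\<lambda>n. r * r^n) summable_on UNIV" using norm_summable_imp_summable_on[OF s2] by simp
    show ?thesis
      by (subst summable_on_reindex) (auto simp: o_def inj_on_def nat_add_distrib s2')
  qed
  show ?thesis unfolding U by (rule summable_on_Un_disjoint[OF a b]) auto
qed

lemma exp_bound_int:
  fixes kap b :: real and n :: int
  assumes "kap > 0"
  shows "exp (- kap * (n + b)^2) \<le> exp (kap * (1/4 + \<bar>b\<bar>)) * exp (-kap) ^ nat \<bar>n\<bar>"
proof -
  have "exp (-kap) ^ nat \<bar>n\<bar> = exp (- kap * \<bar>n\<bar>)"
    by (simp add: exp_of_nat_mult[symmetric])
  moreover have "(n + b)^2 \<ge> \<bar>n\<bar> - \<bar>b\<bar> - 1/4"
  proof -
    have "(\<bar>n+b\<bar> - 1/2)^2 \<ge> 0" by simp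
    then have "(n+b)^2 \<ge> \<bar>n+b\<bar> - 1/4" by (simp add: power2_eq_square algebra_simps abs_mult_self_eq)
    moreover have "\<bar>n+b\<bar> \<ge> \<bar>n\<bar> - \<bar>b\<bar>" by linarith
    ultimately show ?thesis by linarith
  qed
  moreover have "kap * \<bar>n\<bar> \<le> kap * (\<bar>b\<bar> + 1/4 + (n+b)^2)"
    using calculation(2) assms by (intro mult_left_mono) auto
  ultimately show ?thesis using assms
    by (simp add: exp_add[symmetric] algebra_simps)
qed

lemma gauss_summable:
  assumes "Im t > 0" "a > 0"
  shows "(\<lambda>n::int. qpow t (a * (of_int n + b)^2)) summable_on UNIV"
proof -
  define kap where "kap = 2*pi*a*Im t"
  have kap: "kap > 0" using assms by (simp add: kap_def)
  have g: "(\<lambda>n::int. exp (kap * (1/4 + \<bar>b\<bar>)) * exp (-kap) ^ nat \<bar>n\<bar>) summable_on UNIV"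
    by (intro summable_on_cmult_right geo_int_summable) (use kap in auto)
  have b: "norm (qpow t (a * (of_int n + b)^2)) \<le> exp (kap * (1/4 + \<bar>b\<bar>)) * exp (-kap) ^ nat \<bar>n\<bar>" for n :: int
  proof -
    have "norm (qpow t (a * (of_int n + b)^2)) = exp (- kap * (n + b)^2)"
      by (simp add: norm_qpow kap_def algebra_simps)
    also have "\<dots> \<le> exp (kap * (1/4 + \<bar>b\<bar>)) * exp (-kap) ^ nat \<bar>n\<bar>" by (rule exp_bound_int[OF kap])
    finally show ?thesis .
  qed
  have "(\<lambda>n::int. norm (qpow t (a * (of_int n + b)^2))) summable_on UNIV"
    by (rule summable_on_comparison_test[OF g]) (use b in auto)
  then show ?thesis using summable_on_iff_abs_summable_on_complex by blast
qed

lemma prod_has_sum: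
  fixes f g :: "'a \<Rightarrow> complex"
  assumes "f summable_on UNIV" "g summable_on UNIV"
  shows "((\<lambda>(x,y). f x * g y) has_sum (infsum f UNIV * infsum g UNIV)) UNIV"
proof -
  have af: "(\<lambda>x. norm (f x)) summable_on UNIV" and ag: "(\<lambda>x. norm (g x)) summable_on UNIV"
    using assms summable_on_iff_abs_summable_on_complex by blast+
  have "(\<lambda>z. norm ((\<lambda>(x,y). f x * g y) z)) summable_on (UNIV \<times> UNIV)"
    apply (rule Infinite_Sum.abs_summable_on_Sigma_iff[where A=UNIV and B="\<lambda>_. UNIV", THEN iffD2])
    using infsum_nonneg[of UNIV "\<lambda>y. norm (g y)"]
    by (auto simp: norm_mult infsum_cmult_right' abs_mult intro!: summable_on_cmult_right summable_on_cmult_left af ag)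
  then have s: "(\<lambda>(x,y). f x * g y) summable_on (UNIV \<times> UNIV)"
    using summable_on_iff_abs_summable_on_complex by blast
  have "infsum (\<lambda>(x,y). f x * g y) (UNIV \<times> UNIV) = infsum (\<lambda>x. infsum (\<lambda>y. f x * g y) UNIV) UNIV"
    using infsum_Sigma'_banach[OF s] by simp
  also have "\<dots> = infsum f UNIV * infsum g UNIV"
    by (simp add: infsum_cmult_right' infsum_cmult_left')
  finally show ?thesis using s by (metis UNIV_Times_UNIV has_sum_infsum)
qed



definition tri :: "nat \<Rightarrow> nat" where "tri k = k*(k+1) div 2"

lemma tri_Suc: "tri (Suc k) = tri k + Suc k"
  unfolding tri_def by (induction k) auto

lemma tri_0[simp]: "tri 0 = 0" by (simp add: tri_def)

definition Ppr :: "'a::comm_ring_1 \<Rightarrow> nat \<Rightarrow> nat \<Rightarrow> 'a" where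
  "Ppr q k n = (\<Prod>i\<in>{k..<n}. (1 - q^Suc i))"

definition sf :: "'a::comm_ring_1 \<Rightarrow> nat \<Rightarrow> nat \<Rightarrow> 'a" where
  "sf q n k = (-1)^k * Ppr q k n * q^(n*k + tri k)"

lemma Ppr_Suc_left: "k < n \<Longrightarrow> Ppr q k n = (1 - q^Suc k) * Ppr q (Suc k) n"
  unfolding Ppr_def by (simp add: prod.atLeast_Suc_lessThan)

lemma Ppr_Suc_right: "k \<le> n \<Longrightarrow> Ppr q k (Suc n) = Ppr q k n * (1 - q^Suc n)"
  unfolding Ppr_def by (simp add: prod.atLeastLessThan_Suc)

lemma Ppr_self[simp]: "Ppr q n n = 1" unfolding Ppr_def by simp

lemma tele:
  fixes q :: "'a::comm_ring_1"
  shows "j \<le> m \<Longrightarrow> (\<Sum>k\<le>j. sf q m k * (q^k*(1-q^Suc m) - 1))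
     = (-1)^Suc j * Ppr q j m * q^(m*Suc j + tri (Suc j))"
proof (induction j)
  case 0
  then show ?case by (simp add: sf_def tri_def algebra_simps)
next
  case (Suc j)
  then have IH: "(\<Sum>k\<le>j. sf q m k * (q^k*(1-q^Suc m) - 1))
     = (-1)^Suc j * Ppr q j m * q^(m*Suc j + tri (Suc j))" by simp
  have P: "Ppr q j m = (1 - q^Suc j) * Ppr q (Suc j) m" using Suc.prems by (intro Ppr_Suc_left) simp
  have e: "m * Suc (Suc j) + tri (Suc (Suc j)) = (m*Suc j + tri (Suc j)) + Suc j + Suc m"
    by (simp add: tri_Suc)
  have "(\<Sum>k\<le>Suc j. sf q m k * (q^k*(1-q^Suc m) - 1)) =
     (-1)^Suc j * Ppr q j m * q^(m*Suc j + tri (Suc j)) + sf q m (Suc j) * (q^Suc j*(1-q^Suc m) - 1)"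
    using IH by simp
  also have "\<dots> = (-1)^Suc (Suc j) * Ppr q (Suc j) m * q^(m*Suc (Suc j) + tri (Suc (Suc j)))"
    unfolding P sf_def e power_add by (simp add: algebra_simps)
  finally show ?case .
qed

lemma shanks:
  fixes q :: "'a::comm_ring_1"
  shows "(\<Sum>k\<le>n. sf q n k) = (\<Sum>k\<le>n. (-1)^k * q^(k*k + tri k)) + (\<Sum>k\<in>{1..n}. (-1)^k * q^(k*k + tri k - k))"
proof (induction n)
  case 0
  then show ?case by (simp add: sf_def)
next
  case (Suc m)
  have s1: "sf q (Suc m) k = sf q m k * (q^k*(1-q^Suc m)) + 0" if "k \<le> m" for k
    using that unfolding sf_def by (simp add: Ppr_Suc_right power_add algebra_simps)
  have "(\<Sum>k\<le>Suc m. sf q (Suc m) k) = (\<Sum>k\<le>m. sf q (Suc m) k) + sf q (Suc m) (Suc m)" by simp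
  also have "(\<Sum>k\<le>m. sf q (Suc m) k) = (\<Sum>k\<le>m. sf q m k * (q^k*(1-q^Suc m) - 1)) + (\<Sum>k\<le>m. sf q m k)"
    by (simp add: s1 sum.distrib[symmetric] algebra_simps)
  also have "\<dots> = (-1)^Suc m * q^(m*Suc m + tri (Suc m)) + (\<Sum>k\<le>m. sf q m k)"
    by (subst tele) auto
  finally have "(\<Sum>k\<le>Suc m. sf q (Suc m) k) = (-1)^Suc m * q^(m*Suc m + tri (Suc m)) + (\<Sum>k\<le>m. sf q m k) + sf q (Suc m) (Suc m)" .
  moreover have "sf q (Suc m) (Suc m) = (-1)^Suc m * q^(Suc m * Suc m + tri (Suc m))"
    by (simp add: sf_def)
  moreover have "m*Suc m + tri (Suc m) = Suc m * Suc m + tri (Suc m) - Suc m" by simp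
  ultimately show ?case using Suc.IH by (simp add: algebra_simps)
qed


lemma real_tri: "real (tri k) = real k * (real k + 1) / 2"
  by (induction k) (simp_all add: tri_Suc field_simps)

definition sg :: "int \<Rightarrow> complex" where "sg k = (if even k then 1 else -1)"

lemma sg_nat: "sg (int k) = (-1)^k"
  by (simp add: sg_def minus_one_power_iff)

lemma sg_neg[simp]: "sg (- k) = sg k" by (simp add: sg_def)

lemma sym_partial:
  fixes f :: "int \<Rightarrow> 'a::{comm_monoid_add,t2_space}"
  assumes "f summable_on UNIV"
  shows "(\<lambda>n. \<Sum>k\<in>{- int n..int n}. f k) \<longlonglongrightarrow> infsum f UNIV"
proof -
  have h: "(sum f \<longlongrightarrow> infsum f UNIV) (finite_subsets_at_top UNIV)"
    using has_sum_infsum[OF assms] unfolding has_sum_def .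
  have fl: "filterlim (\<lambda>n. {- int n..int n}) (finite_subsets_at_top UNIV) sequentially"
    unfolding filterlim_finite_subsets_at_top
  proof (intro allI impI)
    fix X :: "int set" assume "finite X \<and> X \<subseteq> UNIV"
    then obtain M where M: "abs ` X \<subseteq> {..M}" using finite_int_iff_bounded_le by blast
    show "\<forall>\<^sub>F n in sequentially. finite {- int n..int n} \<and> X \<subseteq> {- int n..int n} \<and> {- int n..int n} \<subseteq> UNIV"
      using eventually_ge_at_top[of "nat M"]
    proof eventually_elim
      case (elim n)
      have "X \<subseteq> {- int n..int n}"
      proof
        fix x assume "x \<in> X"
        then have "\<bar>x\<bar> \<le> M" using M by auto
        then show "x \<in> {- int n..int n}" using elim by auto
      qed
      then show ?case by auto
    qed
  qed
  show ?thesis using filterlim_compose[OF h fl] by (simp add: o_def)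
qed

lemma sym_split:
  fixes f :: "int \<Rightarrow> 'a::comm_monoid_add"
  shows "(\<Sum>k\<in>{- int n..int n}. f k) = (\<Sum>k\<le>n. f (int k)) + (\<Sum>k\<in>{1..n}. f (- int k))"
proof (induction n)
  case 0
  then show ?case by simp
next
  case (Suc n)
  have e: "{- int (Suc n)..int (Suc n)} = insert (int (Suc n)) (insert (- int (Suc n)) {- int n..int n})"
    by auto
  have "(\<Sum>k\<in>{- int (Suc n)..int (Suc n)}. f k) = f (int (Suc n)) + (f (- int (Suc n)) + (\<Sum>k\<in>{- int n..int n}. f k))"
    unfolding e by (subst sum.insert; simp)+
  then show ?case using Suc.IH by (simp add: algebra_simps)
qed



lemma sign_summable:
  fixes H s :: "'a \<Rightarrow> complex"
  assumes "H summable_on A" "\<And>x. norm (s x) \<le> 1"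
  shows "(\<lambda>x. s x * H x) summable_on A"
proof -
  have "(\<lambda>x. norm (H x)) summable_on A" using assms(1) summable_on_iff_abs_summable_on_complex by blast
  then have "(\<lambda>x. norm (s x * H x)) summable_on A"
    by (rule summable_on_comparison_test)
       (auto simp: norm_mult intro: mult_left_le_one_le assms(2))
  then show ?thesis using summable_on_iff_abs_summable_on_complex by blast
qed

lemma norm_sg[simp]: "norm (sg k) = 1" by (simp add: sg_def)

lemma Ppr_bound:
  fixes q :: complex
  assumes "norm q < 1"
  shows "norm (Ppr q k n) \<le> exp (1 / (1 - norm q))"
proof -
  define r where "r = norm q"
  have r: "0 \<le> r" "r < 1" using assms by (auto simp: r_def)
  have "norm (Ppr q k n) = (\<Prod>i\<in>{k..<n}. norm (1 - q^Suc i))"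
    unfolding Ppr_def by (simp add: prod_norm)
  also have "\<dots> \<le> (\<Prod>i\<in>{k..<n}. exp (r^Suc i))"
  proof (rule prod_mono, safe)
    fix i
    have "norm (1 - q^Suc i) \<le> 1 + r^Suc i"
      using norm_triangle_ineq4[of 1 "q^Suc i"] by (simp add: r_def norm_power norm_mult)
    also have "\<dots> \<le> exp (r^Suc i)" by (rule exp_ge_add_one_self[THEN order.trans]) simp
    finally show "norm (1 - q^Suc i) \<le> exp (r^Suc i)" by simp
  qed simp
  also have "\<dots> = exp (\<Sum>i\<in>{k..<n}. r^Suc i)" by (simp add: exp_sum)
  also have "(\<Sum>i\<in>{k..<n}. r^Suc i) \<le> (\<Sum>i<n. r^i)"
  proof -
    have "(\<Sum>i\<in>{k..<n}. r^Suc i) \<le> (\<Sum>i\<in>{..<n}. r^Suc i)"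
      by (rule sum_mono2) (use r in auto)
    also have "\<dots> \<le> (\<Sum>i<n. r^i)"
    proof (rule sum_mono)
      fix i show "r^Suc i \<le> r^i" using r by (intro power_decreasing) auto
    qed
    finally show ?thesis .
  qed
  also have "(\<Sum>i<n. r^i) = (1 - r^n) / (1 - r)"
    using r by (simp add: sum_gp_strict)
  also have "\<dots> \<le> 1 / (1 - r)"
    using r by (intro divide_right_mono) auto
  finally show ?thesis by (simp add: r_def)
qed

lemma pentagonal:
  assumes "Im t > 0"
  shows "((\<lambda>k::int. sg k * qpow t ((6 * of_int k + 1)^2 / 24)) has_sum dedekind_eta t) UNIV"
proof -
  define q where "q = qpow t 1"
  define r where "r = norm q"
  have r: "0 < r" "r < 1" using assms by (auto simp: r_def q_def norm_qpow)
  have nq: "norm q < 1" using r by (simp add: r_def)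
  define F where "F k = sg k * qpow t (of_int k * (3 * of_int k + 1) / 2)" for k :: int
  define G where "G k = sg k * qpow t ((6 * of_int k + 1)^2 / 24)" for k :: int
  have GF: "G k = qpow t (1/24) * F k" for k
  proof -
    have "(6 * of_int k + 1)^2 / 24 = 1/24 + (of_int k * (3 * of_int k + 1) / 2 :: real)"
      by (simp add: power2_eq_square field_simps)
    then have "G k = sg k * qpow t (1/24 + (of_int k * (3 * of_int k + 1) / 2 :: real))"
      by (simp only: G_def)
    then show ?thesis unfolding F_def by (simp add: qpow_add)
  qed
  have FG: "F k = qpow t (-1/24) * G k" for k
  proof -
    have "qpow t (-1/24) * qpow t (1/24) = 1" by (subst qpow_add[symmetric]) (simp add: qpow_def)
    then show ?thesis unfolding GF by (simp add: mult.assoc[symmetric])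
  qed
  have Gs: "G summable_on UNIV"
  proof -
    have g: "(\<lambda>k::int. qpow t (3/2 * (of_int k + 1/6)^2)) summable_on UNIV"
      by (rule gauss_summable) (use assms in auto)
    have e: "(6 * of_int k + 1)^2 / (24::real) = 3/2 * (of_int k + 1/6)^2" for k :: int
      by (simp add: power2_eq_square field_simps)
    have "(\<lambda>k::int. qpow t ((6 * of_int k + 1)^2 / 24)) summable_on UNIV" unfolding e by (rule g)
    then show ?thesis unfolding G_def by (rule sign_summable) simp
  qed
  have Fs: "F summable_on UNIV" unfolding FG by (intro summable_on_cmult_right Gs)
  have RHS: "(\<Sum>k\<le>n. (-1)^k * q^(k*k + tri k)) + (\<Sum>k\<in>{1..n}. (-1)^k * q^(k*k + tri k - k))
        = (\<Sum>k\<in>{- int n..int n}. F k)" for n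
  proof -
    have a: "(-1)^k * q^(k*k + tri k) = F (int k)" for k
    proof -
      have e: "real (k*k + tri k) = real_of_int (int k) * (3 * real_of_int (int k) + 1) / 2"
        by (simp add: real_tri field_simps)
      have "(-1)^k * q^(k*k+tri k) = (-1)^k * qpow t (real (k*k + tri k))" by (simp only: q_def qpow_nat)
      also have "\<dots> = F (int k)" unfolding e F_def sg_nat ..
      finally show ?thesis .
    qed
    have b: "(-1)^k * q^(k*k + tri k - k) = F (- int k)" for k
    proof -
      have "k \<le> k * k + tri k" by (cases k) auto
      then have "real (k*k + tri k - k) = real_of_int (- int k) * (3 * real_of_int (- int k) + 1) / 2"
        by (simp add: of_nat_diff real_tri field_simps)
      then show ?thesis unfolding F_def q_def qpow_nat[symmetric] sg_neg sg_nat by simp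
    qed
    show ?thesis unfolding sym_split a b ..
  qed
  have L1: "(\<lambda>n. \<Sum>k\<le>n. sf q n k) \<longlonglongrightarrow> infsum F UNIV"
    unfolding shanks RHS by (rule sym_partial[OF Fs])
  define C where "C = exp (1 / (1 - r))"
  have split: "(\<Sum>k\<le>n. sf q n k) = Ppr q 0 n + (\<Sum>k\<in>{1..n}. sf q n k)" for n
  proof -
    have "{..n} = insert 0 {1..n}" by auto
    then show ?thesis by (simp add: sf_def)
  qed
  have bnd: "norm (\<Sum>k\<in>{1..n}. sf q n k) \<le> real n * (C * r^n)" for n
  proof -
    have "norm (\<Sum>k\<in>{1..n}. sf q n k) \<le> (\<Sum>k\<in>{1..n}. norm (sf q n k))" by (rule norm_sum)
    also have "\<dots> \<le> (\<Sum>k\<in>{1..n}. C * r^n)"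
    proof (rule sum_mono)
      fix k assume k: "k \<in> {1..n}"
      have "norm (sf q n k) = norm (Ppr q k n) * r^(n*k + tri k)"
        by (simp add: sf_def norm_mult norm_power r_def)
      also have "\<dots> \<le> C * r^n"
      proof (rule mult_mono)
        show "norm (Ppr q k n) \<le> C" unfolding C_def r_def by (rule Ppr_bound[OF nq])
        have "n * 1 \<le> n*k" using k by (intro mult_le_mono2) auto
        then have "n \<le> n*k + tri k" by linarith
        then show "r^(n*k + tri k) \<le> r^n" using r by (intro power_decreasing) auto
      qed (use r in \<open>auto simp: C_def\<close>)
      finally show "norm (sf q n k) \<le> C * r^n" .
    qed
    also have "\<dots> = real n * (C * r^n)" by simp
    finally show ?thesis .
  qed
  have "(\<lambda>n. real n * r^n) \<longlonglongrightarrow> 0" using powser_times_n_limit_0[of r] r by simp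
  then have "(\<lambda>n. C * (real n * r^n)) \<longlonglongrightarrow> 0" by (simp add: tendsto_mult_right_zero)
  then have "(\<lambda>n. real n * (C * r^n)) \<longlonglongrightarrow> 0" by (simp add: algebra_simps)
  then have L2: "(\<lambda>n. \<Sum>k\<in>{1..n}. sf q n k) \<longlonglongrightarrow> 0"
    by (rule Lim_null_comparison[rotated]) (use bnd in auto)
  have L3: "(\<lambda>n. Ppr q 0 n) \<longlonglongrightarrow> infsum F UNIV - 0"
  proof -
    have "(\<lambda>n. (\<Sum>k\<le>n. sf q n k) - (\<Sum>k\<in>{1..n}. sf q n k)) \<longlonglongrightarrow> infsum F UNIV - 0"
      by (intro tendsto_diff L1 L2)
    then show ?thesis unfolding split by simp
  qed
  define f where "f n = 1 - qpow t (real (Suc n))" for n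
  have f: "f = (\<lambda>i. 1 - q^Suc i)" unfolding f_def q_def qpow_nat ..
  have "summable (\<lambda>i. r * r^i)" using summable_geometric[of r] r by (intro summable_mult) auto
  then have "summable (\<lambda>i. norm (f i - 1))" unfolding f by (simp add: norm_power norm_mult r_def)
  then have cp: "convergent_prod f"
    by (intro abs_convergent_prod_imp_convergent_prod summable_imp_abs_convergent_prod)
  have "(\<lambda>n. \<Prod>i<n. f i) \<longlonglongrightarrow> prodinf f"
    using convergent_prod_LIMSEQ[OF cp] LIMSEQ_lessThan_iff_atMost by blast
  moreover have "(\<Prod>i<n. f i) = Ppr q 0 n" for n unfolding f Ppr_def by (simp add: atLeast0LessThan)
  ultimately have "(\<lambda>n. Ppr q 0 n) \<longlonglongrightarrow> prodinf f" by simp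
  then have P: "prodinf f = infsum F UNIV" using L3 LIMSEQ_unique by fastforce
  have "dedekind_eta t = qpow t (1/24) * infsum F UNIV"
    unfolding dedekind_eta_def P[symmetric] f_def ..
  also have "\<dots> = infsum G UNIV" unfolding GF by (simp add: infsum_cmult_right')
  finally have "dedekind_eta t = infsum G UNIV" .
  then show ?thesis using has_sum_infsum[OF Gs] unfolding G_def by simp
qed



lemma qpow_sc: "qpow (of_real c * t) s = qpow t (c * s)" by (rule qpow_scale)

lemma th_a: "theta2 (2 * t / 3) = (\<Sum>\<^sub>\<infinity>m::int. qpow t ((2 * of_int m + 1)^2 / 12))"
proof -
  have "qpow (2 * t / 3) ((of_int n + 1/2)^2 / 2) = qpow t ((2 * of_int n + 1)^2 / 12)" for n :: int
  proof -
    have "2 * t / 3 = of_real (2/3) * t" by simp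
    moreover have "2/3 * ((of_int n + 1/2)^2 / 2) = ((2 * of_int n + 1)^2 / 12 :: real)"
      by (simp add: power2_eq_square field_simps)
    ultimately show ?thesis by (simp only: qpow_sc)
  qed
  then show ?thesis unfolding theta2_def by simp
qed

lemma th_b: "theta3 (6 * t) = (\<Sum>\<^sub>\<infinity>m::int. qpow t ((6 * of_int m)^2 / 12))"
proof -
  have "qpow (6 * t) ((of_int n)^2 / 2) = qpow t ((6 * of_int n)^2 / 12)" for n :: int
  proof -
    have "6 * t = of_real 6 * t" by simp
    moreover have "6 * ((of_int n)^2 / 2) = ((6 * of_int n)^2 / 12 :: real)"
      by (simp add: power2_eq_square field_simps)
    ultimately show ?thesis by (simp only: qpow_sc)
  qed
  then show ?thesis unfolding theta3_def by simp
qed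

lemma th_c: "theta3 (2 * t / 3) = (\<Sum>\<^sub>\<infinity>m::int. qpow t ((2 * of_int m)^2 / 12))"
proof -
  have "qpow (2 * t / 3) ((of_int n)^2 / 2) = qpow t ((2 * of_int n)^2 / 12)" for n :: int
  proof -
    have "2 * t / 3 = of_real (2/3) * t" by simp
    moreover have "2/3 * ((of_int n)^2 / 2) = ((2 * of_int n)^2 / 12 :: real)"
      by (simp add: power2_eq_square field_simps)
    ultimately show ?thesis by (simp only: qpow_sc)
  qed
  then show ?thesis unfolding theta3_def by simp
qed

lemma th_d: "theta2 (6 * t) = (\<Sum>\<^sub>\<infinity>m::int. qpow t ((6 * of_int m + 3)^2 / 12))"
proof -
  have "qpow (6 * t) ((of_int n + 1/2)^2 / 2) = qpow t ((6 * of_int n + 3)^2 / 12)" for n :: int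
  proof -
    have "6 * t = of_real 6 * t" by simp
    moreover have "6 * ((of_int n + 1/2)^2 / 2) = ((6 * of_int n + 3)^2 / 12 :: real)"
      by (simp add: power2_eq_square field_simps)
    ultimately show ?thesis by (simp only: qpow_sc)
  qed
  then show ?thesis unfolding theta2_def by simp
qed

lemma sg_pow: "(-1) ^ nat \<bar>n\<bar> = sg n"
  by (simp add: sg_def minus_one_power_iff even_nat_iff)

lemma th_e: "theta4 (3 * t / 2) = (\<Sum>\<^sub>\<infinity>m::int. sg m * qpow t ((3 * of_int m)^2 / 12))"
proof -
  have "qpow (3 * t / 2) ((of_int n)^2 / 2) = qpow t ((3 * of_int n)^2 / 12)" for n :: int
  proof -
    have "3 * t / 2 = of_real (3/2) * t" by simp
    moreover have "3/2 * ((of_int n)^2 / 2) = ((3 * of_int n)^2 / 12 :: real)"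
      by (simp add: power2_eq_square field_simps)
    ultimately show ?thesis by (simp only: qpow_sc)
  qed
  then show ?thesis unfolding theta4_def sg_pow by simp
qed

lemma th_f: "theta3 (t / 6) = (\<Sum>\<^sub>\<infinity>m::int. qpow t ((of_int m)^2 / 12))"
proof -
  have "qpow (t / 6) ((of_int n)^2 / 2) = qpow t ((of_int n)^2 / 12)" for n :: int
  proof -
    have "t / 6 = of_real (1/6) * t" by simp
    moreover have "1/6 * ((of_int n)^2 / 2) = ((of_int n)^2 / 12 :: real)"
      by (simp add: power2_eq_square field_simps)
    ultimately show ?thesis by (simp only: qpow_sc)
  qed
  then show ?thesis unfolding theta3_def by simp
qed

lemma th_g: "theta3 (3 * t / 2) = (\<Sum>\<^sub>\<infinity>m::int. qpow t ((3 * of_int m)^2 / 12))"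
proof -
  have "qpow (3 * t / 2) ((of_int n)^2 / 2) = qpow t ((3 * of_int n)^2 / 12)" for n :: int
  proof -
    have "3 * t / 2 = of_real (3/2) * t" by simp
    moreover have "3/2 * ((of_int n)^2 / 2) = ((3 * of_int n)^2 / 12 :: real)"
      by (simp add: power2_eq_square field_simps)
    ultimately show ?thesis by (simp only: qpow_sc)
  qed
  then show ?thesis unfolding theta3_def by simp
qed

lemma th_h: "theta4 (t / 6) = (\<Sum>\<^sub>\<infinity>m::int. sg m * qpow t ((of_int m)^2 / 12))"
proof -
  have "qpow (t / 6) ((of_int n)^2 / 2) = qpow t ((of_int n)^2 / 12)" for n :: int
  proof -
    have "t / 6 = of_real (1/6) * t" by simp
    moreover have "1/6 * ((of_int n)^2 / 2) = ((of_int n)^2 / 12 :: real)"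
      by (simp add: power2_eq_square field_simps)
    ultimately show ?thesis by (simp only: qpow_sc)
  qed
  then show ?thesis unfolding theta4_def sg_pow by simp
qed

lemma gsum:
  assumes "Im t > 0" "a > 0"
  shows "(\<lambda>n::int. qpow t ((a * of_int n + b)^2 / 12)) summable_on UNIV"
proof -
  have e: "(a * of_int n + b)^2 / 12 = a^2/12 * (of_int n + b/a)^2" for n :: int
    using assms(2) by (simp add: power2_eq_square field_simps)
  show ?thesis unfolding e by (rule gauss_summable) (use assms in auto)
qed

lemma gsum0:
  assumes "Im t > 0" "a > 0"
  shows "(\<lambda>n::int. qpow t ((a * of_int n)^2 / 12)) summable_on UNIV"
  using gsum[OF assms, of 0] by simp

lemma gsum1:
  assumes "Im t > 0"
  shows "(\<lambda>n::int. qpow t ((of_int n)^2 / 12)) summable_on UNIV"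
  using gsum0[OF assms, of 1] by simp



definition ET :: "complex \<Rightarrow> int \<times> int \<Rightarrow> complex" where
  "ET t z = qpow t (((of_int (fst z))^2 + (of_int (snd z))^2) / 12)"

definition cc :: "int \<times> int \<Rightarrow> complex" where
  "cc z = (if 3 dvd snd z \<and> odd (fst z + snd z) then sg (snd z) else 0)"

lemma ET_split: "ET t (u, v) = qpow t ((of_int u)^2 / 12) * qpow t ((of_int v)^2 / 12)"
  unfolding ET_def by (simp add: qpow_add[symmetric] add_divide_distrib)

lemma norm_cc: "norm (cc z) \<le> 1" by (simp add: cc_def)

lemma ccET_summable:
  assumes "Im t > 0"
  shows "(\<lambda>z. cc z * ET t z) summable_on UNIV"
proof -
  have "(\<lambda>(x,y). qpow t ((of_int x)^2 / 12) * qpow t ((of_int y)^2 / 12)) summable_on UNIV"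
    using prod_has_sum[OF gsum1[OF assms] gsum1[OF assms]] summable_on_def by blast
  moreover have "(\<lambda>(x,y). qpow t ((of_int x)^2 / 12) * qpow t ((of_int y)^2 / 12)) = ET t"
    by (auto simp: ET_split)
  ultimately have "ET t summable_on UNIV" by simp
  then show ?thesis by (rule sign_summable) (rule norm_cc)
qed

lemma reindex_ext:
  fixes g :: "'a \<Rightarrow> complex"
  assumes "inj h" "((\<lambda>x. g (h x)) has_sum s) UNIV"
  shows "((\<lambda>z. if z \<in> range h then g z else 0) has_sum s) UNIV"
proof -
  have "(g has_sum s) (range h) = ((\<lambda>x. g (h x)) has_sum s) UNIV"
    using has_sum_reindex[OF assms(1)] by (simp add: o_def)
  then have "(g has_sum s) (range h)" using assms(2) by simp
  then show ?thesis by (subst (asm) has_sum_cong_neutral[where T=UNIV]) auto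
qed

lemma has_sum_diff':
  fixes f g :: "'a \<Rightarrow> complex"
  assumes "(f has_sum a) A" "(g has_sum b) A"
  shows "((\<lambda>x. f x - g x) has_sum (a - b)) A"
proof -
  have "((\<lambda>x. - g x) has_sum (- b)) A" using assms(2) by (subst has_sum_uminus) simp
  from has_sum_add[OF assms(1) this] show ?thesis by simp
qed

lemma partA:
  assumes "Im t > 0"
  shows "theta2 (2 * t / 3) * theta3 (6 * t) - theta3 (2 * t / 3) * theta2 (6 * t)
    = infsum (\<lambda>z. cc z * ET t z) UNIV"
proof -
  define h1 where "h1 = (\<lambda>(x::int,y::int). (2*x+1, 6*y))"
  define h2 where "h2 = (\<lambda>(x::int,y::int). (2*x, 6*y+3))"
  have i1: "inj h1" unfolding h1_def inj_def by auto
  have i2: "inj h2" unfolding h2_def inj_def by auto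
  have P1: "((\<lambda>(x,y). qpow t ((2 * of_int x + 1)^2 / 12) * qpow t ((6 * of_int y)^2 / 12)) has_sum
      (theta2 (2 * t / 3) * theta3 (6 * t))) UNIV"
    unfolding th_a th_b
    apply (rule prod_has_sum)
     apply (rule gsum[OF assms], simp)
    apply (rule gsum0[OF assms], simp)
    done
  have P2: "((\<lambda>(x,y). qpow t ((2 * of_int x)^2 / 12) * qpow t ((6 * of_int y + 3)^2 / 12)) has_sum
      (theta3 (2 * t / 3) * theta2 (6 * t))) UNIV"
    unfolding th_c th_d
    apply (rule prod_has_sum)
     apply (rule gsum0[OF assms], simp)
    apply (rule gsum[OF assms], simp)
    done
  have "(\<lambda>(x,y). qpow t ((2 * of_int x + 1)^2 / 12) * qpow t ((6 * of_int y)^2 / 12)) = (\<lambda>p. ET t (h1 p))"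
    by (auto simp: h1_def ET_split)
  with P1 have Q1: "((\<lambda>z. if z \<in> range h1 then ET t z else 0) has_sum (theta2 (2 * t / 3) * theta3 (6 * t))) UNIV"
    using reindex_ext[OF i1] by simp
  have "(\<lambda>(x,y). qpow t ((2 * of_int x)^2 / 12) * qpow t ((6 * of_int y + 3)^2 / 12)) = (\<lambda>p. ET t (h2 p))"
    by (auto simp: h2_def ET_split)
  with P2 have Q2: "((\<lambda>z. if z \<in> range h2 then ET t z else 0) has_sum (theta3 (2 * t / 3) * theta2 (6 * t))) UNIV"
    using reindex_ext[OF i2] by simp
  have R1: "z \<in> range h1 \<longleftrightarrow> odd (fst z) \<and> 6 dvd snd z" for z
  proof
    assume "z \<in> range h1" then show "odd (fst z) \<and> 6 dvd snd z" by (auto simp: h1_def)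
  next
    assume a: "odd (fst z) \<and> 6 dvd snd z"
    then obtain x y where "fst z = 2*x+1" "snd z = 6*y" by (metis dvdE oddE)
    then have "z = h1 (x,y)" by (simp add: h1_def prod_eq_iff)
    then show "z \<in> range h1" by blast
  qed
  have R2: "z \<in> range h2 \<longleftrightarrow> even (fst z) \<and> snd z mod 6 = 3" for z
  proof
    assume "z \<in> range h2" then show "even (fst z) \<and> snd z mod 6 = 3" by (auto simp: h2_def)
  next
    assume a: "even (fst z) \<and> snd z mod 6 = 3"
    then obtain x where x: "fst z = 2*x" by (metis dvdE)
    have "snd z = 6 * (snd z div 6) + 3" using a by (metis mult_div_mod_eq)
    then have "z = h2 (x, snd z div 6)" using x by (simp add: h2_def prod_eq_iff)
    then show "z \<in> range h2" by blast
  qed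
  have pt: "(if z \<in> range h1 then ET t z else 0) - (if z \<in> range h2 then ET t z else 0) = cc z * ET t z" for z
  proof -
    obtain u v where z: "z = (u,v)" by (cases z)
    show ?thesis unfolding R1 R2 z cc_def sg_def by (auto; presburger)
  qed
  have "((\<lambda>z. cc z * ET t z) has_sum (theta2 (2 * t / 3) * theta3 (6 * t) - theta3 (2 * t / 3) * theta2 (6 * t))) UNIV"
    using has_sum_diff'[OF Q1 Q2] unfolding pt .
  then show ?thesis by (simp add: infsumI)
qed



lemma partB:
  assumes "Im t > 0"
  shows "theta4 (3 * t / 2) * theta3 (t / 6) - theta3 (3 * t / 2) * theta4 (t / 6)
    = 2 * infsum (\<lambda>z. cc z * ET t z) UNIV"
proof -
  define h where "h = (\<lambda>(x::int,y::int). (y, 3*x))"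
  have i: "inj h" unfolding h_def inj_def by auto
  have s3: "(\<lambda>m::int. qpow t ((3 * of_int m)^2 / 12)) summable_on UNIV"
    by (rule gsum0[OF assms]) simp
  have s1: "(\<lambda>m::int. qpow t ((of_int m)^2 / 12)) summable_on UNIV"
    by (rule gsum1[OF assms])
  have s3': "(\<lambda>m::int. sg m * qpow t ((3 * of_int m)^2 / 12)) summable_on UNIV"
    by (rule sign_summable[OF s3]) simp
  have s1': "(\<lambda>m::int. sg m * qpow t ((of_int m)^2 / 12)) summable_on UNIV"
    by (rule sign_summable[OF s1]) simp
  have P3: "((\<lambda>(x,y). sg x * qpow t ((3 * of_int x)^2 / 12) * qpow t ((of_int y)^2 / 12)) has_sum
      (theta4 (3 * t / 2) * theta3 (t / 6))) UNIV"
    unfolding th_e th_f by (rule prod_has_sum[OF s3' s1])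
  have P4: "((\<lambda>(x,y). qpow t ((3 * of_int x)^2 / 12) * (sg y * qpow t ((of_int y)^2 / 12))) has_sum
      (theta3 (3 * t / 2) * theta4 (t / 6))) UNIV"
    unfolding th_g th_h by (rule prod_has_sum[OF s3 s1'])
  have D: "((\<lambda>p. (case p of (x,y) \<Rightarrow> sg x * qpow t ((3 * of_int x)^2 / 12) * qpow t ((of_int y)^2 / 12))
      - (case p of (x,y) \<Rightarrow> qpow t ((3 * of_int x)^2 / 12) * (sg y * qpow t ((of_int y)^2 / 12)))) has_sum
      (theta4 (3 * t / 2) * theta3 (t / 6) - theta3 (3 * t / 2) * theta4 (t / 6))) UNIV"
    by (rule has_sum_diff'[OF P3 P4])
  have pt: "(case p of (x,y) \<Rightarrow> sg x * qpow t ((3 * of_int x)^2 / 12) * qpow t ((of_int y)^2 / 12))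
      - (case p of (x,y) \<Rightarrow> qpow t ((3 * of_int x)^2 / 12) * (sg y * qpow t ((of_int y)^2 / 12)))
      = 2 * cc (h p) * ET t (h p)" for p
  proof -
    obtain x y where p: "p = (x,y)" by (cases p)
    have e: "ET t (y, 3*x) = qpow t ((3 * of_int x)^2 / 12) * qpow t ((of_int y)^2 / 12)"
      by (simp add: ET_split)
    have c: "sg x - sg y = 2 * cc (y, 3*x)"
      unfolding cc_def sg_def by (auto; presburger)
    have "(case p of (x,y) \<Rightarrow> sg x * qpow t ((3 * of_int x)^2 / 12) * qpow t ((of_int y)^2 / 12))
      - (case p of (x,y) \<Rightarrow> qpow t ((3 * of_int x)^2 / 12) * (sg y * qpow t ((of_int y)^2 / 12)))
      = (sg x - sg y) * (qpow t ((3 * of_int x)^2 / 12) * qpow t ((of_int y)^2 / 12))"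
      unfolding p by (simp add: algebra_simps)
    also have "\<dots> = 2 * cc (h p) * ET t (h p)" unfolding c e[symmetric] p h_def by simp
    finally show ?thesis .
  qed
  have "((\<lambda>z. if z \<in> range h then 2 * cc z * ET t z else 0) has_sum
      (theta4 (3 * t / 2) * theta3 (t / 6) - theta3 (3 * t / 2) * theta4 (t / 6))) UNIV"
    by (rule reindex_ext[OF i]) (use D in \<open>simp only: pt\<close>)
  moreover have "(if z \<in> range h then 2 * cc z * ET t z else 0) = 2 * cc z * ET t z" for z
  proof (cases "3 dvd snd z")
    case True
    then obtain x where "snd z = 3 * x" by blast
    then have "z = h (x, fst z)" by (simp add: h_def prod_eq_iff)
    then show ?thesis by auto
  next
    case False
    then show ?thesis by (simp add: cc_def)
  qed
  ultimately have "((\<lambda>z. 2 * (cc z * ET t z)) has_sum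
      (theta4 (3 * t / 2) * theta3 (t / 6) - theta3 (3 * t / 2) * theta4 (t / 6))) UNIV"
    by (simp add: mult.assoc)
  moreover have "((\<lambda>z. 2 * (cc z * ET t z)) has_sum (2 * infsum (\<lambda>z. cc z * ET t z) UNIV)) UNIV"
    by (rule has_sum_cmult_right) (rule has_sum_infsum[OF ccET_summable[OF assms]])
  ultimately show ?thesis using has_sum_unique by blast
qed



lemma ET_summable:
  assumes "Im t > 0"
  shows "ET t summable_on UNIV"
proof -
  have "(\<lambda>(x,y). qpow t ((of_int x)^2 / 12) * qpow t ((of_int y)^2 / 12)) summable_on UNIV"
    using prod_has_sum[OF gsum1[OF assms] gsum1[OF assms]] summable_on_def by blast
  moreover have "(\<lambda>(x,y). qpow t ((of_int x)^2 / 12) * qpow t ((of_int y)^2 / 12)) = ET t"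
    by (auto simp: ET_split)
  ultimately show "ET t summable_on UNIV" by simp
qed

lemma ET_swap: "ET t (v, u) = ET t (u, v)" unfolding ET_def by (simp add: add.commute)

lemma part0:
  assumes "Im t > 0"
  shows "((\<lambda>z. if 3 dvd fst z then cc z * ET t z else 0) has_sum 0) UNIV"
proof -
  define w where "w z = (if 3 dvd fst z then cc z * ET t z else 0)" for z
  have ws: "w summable_on UNIV"
  proof -
    have "(\<lambda>z. (if 3 dvd fst z then cc z else 0) * ET t z) summable_on UNIV"
      by (rule sign_summable[OF ET_summable[OF assms]]) (simp add: cc_def)
    moreover have "(\<lambda>z. (if 3 dvd fst z then cc z else 0) * ET t z) = w"
      by (auto simp: w_def)
    ultimately show ?thesis by simp
  qed
  have sw: "w (prod.swap z) = - w z" for z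
  proof -
    obtain u v where z: "z = (u,v)" by (cases z)
    show ?thesis unfolding z w_def cc_def sg_def by (auto simp: ET_swap; presburger)
  qed
  have "infsum w UNIV = infsum (\<lambda>z. w (prod.swap z)) UNIV"
    by (rule infsum_reindex_bij_betw[symmetric]) simp
  also have "\<dots> = infsum (\<lambda>z. - w z) UNIV" unfolding sw ..
  also have "\<dots> = - infsum w UNIV" by (rule infsum_uminus)
  finally have "infsum w UNIV = 0" by simp
  then show ?thesis using has_sum_infsum[OF ws] unfolding w_def by simp
qed

lemma partC:
  assumes "Im t > 0"
  shows "infsum (\<lambda>z. cc z * ET t z) UNIV = 2 * (dedekind_eta t)^2"
proof -
  define G where "G k = sg k * qpow t ((6 * of_int k + 1)^2 / 24)" for k :: int
  have HG: "(G has_sum dedekind_eta t) UNIV" unfolding G_def by (rule pentagonal[OF assms])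
  then have Gs: "G summable_on UNIV" using summable_on_def by blast
  have iG: "infsum G UNIV = dedekind_eta t" using HG by (rule infsumI)
  have PG: "((\<lambda>(j,k). G j * G k) has_sum (dedekind_eta t)^2) UNIV"
    using prod_has_sum[OF Gs Gs] unfolding iG by (simp add: power2_eq_square)
  define h4 where "h4 = (\<lambda>(j::int,k::int). (3*(j+k)+1, 3*(j-k)))"
  define h5 where "h5 = (\<lambda>(j::int,k::int). (-3*(j+k)-1, 3*(j-k)))"
  have i4: "inj h4" unfolding h4_def inj_def by auto
  have i5: "inj h5" unfolding h5_def inj_def by auto
  have qq: "qpow t ((6 * of_int j + 1)^2 / 24) * qpow t ((6 * of_int k + 1)^2 / 24) = ET t (h4 (j,k))"
    for j k :: int
  proof -
    have eq: "(6 * of_int j + 1)^2 / 24 + (6 * of_int k + 1)^2 / 24 =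
      ((of_int (3*(j+k)+1))^2 + (of_int (3*(j-k)))^2) / (12::real)"
      by (simp add: power2_eq_square field_simps)
    have "qpow t ((6 * of_int j + 1)^2 / 24) * qpow t ((6 * of_int k + 1)^2 / 24)
       = qpow t ((6 * of_int j + 1)^2 / 24 + (6 * of_int k + 1)^2 / 24)" by (simp only: qpow_add)
    also have "\<dots> = qpow t (((of_int (3*(j+k)+1))^2 + (of_int (3*(j-k)))^2) / 12)" unfolding eq ..
    also have "\<dots> = ET t (h4 (j,k))" unfolding ET_def h4_def by simp
    finally show ?thesis .
  qed
  have e45: "ET t (h5 p) = ET t (h4 p)" for p
  proof -
    obtain j k where "p = (j,k)" by (cases p)
    then show ?thesis unfolding ET_def h4_def h5_def by (simp add: power2_eq_square algebra_simps)
  qed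
  have c4: "cc (h4 (j,k)) = sg j * sg k" for j k
    unfolding cc_def sg_def h4_def by (auto; presburger)
  have c5: "cc (h5 (j,k)) = sg j * sg k" for j k
    unfolding cc_def sg_def h5_def by (auto; presburger)
  have pt4: "(case p of (j,k) \<Rightarrow> G j * G k) = cc (h4 p) * ET t (h4 p)" for p
  proof -
    obtain j k where p: "p = (j,k)" by (cases p)
    show ?thesis unfolding p c4 qq[symmetric] G_def by (simp add: algebra_simps)
  qed
  have pt5: "(case p of (j,k) \<Rightarrow> G j * G k) = cc (h5 p) * ET t (h5 p)" for p
  proof -
    obtain j k where p: "p = (j,k)" by (cases p)
    show ?thesis unfolding p c5 e45 qq[symmetric] G_def by (simp add: algebra_simps)
  qed
  have Q4: "((\<lambda>z. if z \<in> range h4 then cc z * ET t z else 0) has_sum (dedekind_eta t)^2) UNIV"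
  proof -
    have eq: "(\<lambda>(j,k). G j * G k) = (\<lambda>p. cc (h4 p) * ET t (h4 p))"
      by (rule ext) (rule pt4)
    show ?thesis by (rule reindex_ext[OF i4]) (use PG in \<open>simp only: eq\<close>)
  qed
  have Q5: "((\<lambda>z. if z \<in> range h5 then cc z * ET t z else 0) has_sum (dedekind_eta t)^2) UNIV"
  proof -
    have eq: "(\<lambda>(j,k). G j * G k) = (\<lambda>p. cc (h5 p) * ET t (h5 p))"
      by (rule ext) (rule pt5)
    show ?thesis by (rule reindex_ext[OF i5]) (use PG in \<open>simp only: eq\<close>)
  qed
  have r4: "fst z mod 3 = 1" if "z \<in> range h4" for z using that unfolding h4_def by (auto; presburger)
  have r5: "fst z mod 3 = 2" if "z \<in> range h5" for z using that unfolding h5_def by (auto; presburger)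
  have w4: "z \<in> range h4" if "cc z \<noteq> 0" "fst z mod 3 = 1" for z
  proof -
    obtain u v where z: "z = (u,v)" by (cases z)
    from that have "3 dvd v" "odd (u+v)" unfolding z cc_def by (auto split: if_splits)
    then obtain d where d: "v = 3*d" by blast
    define s where "s = u div 3"
    have um: "u mod 3 = 1" using that(2) unfolding z by simp
    have us: "u = 3 * s + 1" using um unfolding s_def by presburger
    have "even (s+d)" using \<open>odd (u+v)\<close> unfolding us d by presburger
    then obtain m where m: "s + d = 2*m" by blast
    have "h4 (m, m-d) = z" unfolding h4_def z us d using m by simp
    then show ?thesis by (metis rangeI)
  qed
  have w5: "z \<in> range h5" if "cc z \<noteq> 0" "fst z mod 3 = 2" for z
  proof -
    obtain u v where z: "z = (u,v)" by (cases z)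
    from that have "3 dvd v" "odd (u+v)" unfolding z cc_def by (auto split: if_splits)
    then obtain d where d: "v = 3*d" by blast
    define s where "s = - (u div 3) - 1"
    have um: "u mod 3 = 2" using that(2) unfolding z by simp
    have us: "u = -3 * s - 1" using um unfolding s_def by presburger
    have "even (s+d)" using \<open>odd (u+v)\<close> unfolding us d by presburger
    then obtain m where m: "s + d = 2*m" by blast
    have "h5 (m, m-d) = z" unfolding h5_def z us d using m by simp
    then show ?thesis by (metis rangeI)
  qed
  have pt: "cc z * ET t z = (if 3 dvd fst z then cc z * ET t z else 0)
      + (if z \<in> range h4 then cc z * ET t z else 0) + (if z \<in> range h5 then cc z * ET t z else 0)" for z
  proof (cases "cc z = 0")
    case True then show ?thesis by simp
  next
    case False
    have "fst z mod 3 = 0 \<or> fst z mod 3 = 1 \<or> fst z mod 3 = 2" by presburger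
    then show ?thesis
    proof (elim disjE)
      assume a: "fst z mod 3 = 0"
      have "z \<notin> range h4" "z \<notin> range h5" using r4[of z] r5[of z] a by auto
      moreover have "3 dvd fst z" using a by (simp add: dvd_eq_mod_eq_0)
      ultimately show ?thesis by simp
    next
      assume a: "fst z mod 3 = 1"
      have "z \<in> range h4" by (rule w4[OF False a])
      moreover have "z \<notin> range h5" using r5[of z] a by auto
      moreover have "\<not> 3 dvd fst z" using a by (simp add: dvd_eq_mod_eq_0)
      ultimately show ?thesis by simp
    next
      assume a: "fst z mod 3 = 2"
      have "z \<in> range h5" by (rule w5[OF False a])
      moreover have "z \<notin> range h4" using r4[of z] a by auto
      moreover have "\<not> 3 dvd fst z" using a by (simp add: dvd_eq_mod_eq_0)
      ultimately show ?thesis by simp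
    qed
  qed
  have H: "((\<lambda>z. (if 3 dvd fst z then cc z * ET t z else 0)
      + (if z \<in> range h4 then cc z * ET t z else 0) + (if z \<in> range h5 then cc z * ET t z else 0))
      has_sum (0 + (dedekind_eta t)^2 + (dedekind_eta t)^2)) UNIV"
    by (intro has_sum_add part0[OF assms] Q4 Q5)
  have fe: "(\<lambda>z. cc z * ET t z) = (\<lambda>z. (if 3 dvd fst z then cc z * ET t z else 0)
      + (if z \<in> range h4 then cc z * ET t z else 0) + (if z \<in> range h5 then cc z * ET t z else 0))"
    by (rule ext) (rule pt)
  have "((\<lambda>z. cc z * ET t z) has_sum (0 + (dedekind_eta t)^2 + (dedekind_eta t)^2)) UNIV"
    unfolding fe by (rule H)
  then show ?thesis by (simp add: infsumI)
qed

theorem lemma132: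
  fixes \<tau> :: complex
  assumes "Im \<tau> > 0"
  shows "theta2 (2 * \<tau> / 3) * theta3 (6 * \<tau>) - theta3 (2 * \<tau> / 3) * theta2 (6 * \<tau>)
           = 2 * (dedekind_eta \<tau>)^2 \<and>
         theta4 (3 * \<tau> / 2) * theta3 (\<tau> / 6) - theta3 (3 * \<tau> / 2) * theta4 (\<tau> / 6)
           = 4 * (dedekind_eta \<tau>)^2"
  using partA[OF assms] partB[OF assms] partC[OF assms] by simp


end
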